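(* Let $\Omega_2=\{\omega_1,\omega_2\}$ with $\omega_1\neq\omega_2$, and $\mathcal{A}_2=2^{\Omega_2}$. A $q$-measure $\mu$ on $\mathcal{A}_2$ actualizes the coevent $\omega_1^*\oplus\omega_2^*$ if and only if $$\mu(\Omega_2)=\max(\mu(\{\omega_1\}),\mu(\{\omega_2\}))-\min(\mu(\{\omega_1\}),\mu(\{\omega_2\})).$$
   Context: Let $\Omega$ be a finite nonempty set and $\mathcal{A}=2^\Omega$. A coevent is a map $\phi:\mathcal{A}\to\{0,1\}$ with $\phi(\emptyset)=0$. For $\omega\in\Omega$ the evaluation map $\omega^*$ is the coevent with $\omega^*(A)=1$ if $\omega\in A$ and $0$ otherwise. Coevents are combined pointwise: $(\phi\oplus\psi)(A)=\phi(A)+\psi(A) \bmod 2$ and $(\phi\psi)(A)=\phi(A)\psi(A)$. For $f:\Omega\to[0,\infty)$ and a coevent $\phi$, the $q$-integral is $\int f\,d\phi=\int_0^\infty \phi(\{\omega\in\Omega: f(\omega)>\lambda\})\,d\lambda$ (Lebesgue measure in $\lambda$), and for $A\in\mathcal{A}$, $\int_A f\,d\phi=\int f\chi_A\,d\phi$. A $q$-measure is a map $\mu:\mathcal{A}\to[0,\infty)$ such that for all pairwise disjoint $A,B,C\in\mathcal{A}$: $\mu(A\cup B\cup C)=\mu(A\cup B)+\mu(A\cup C)+\mu(B\cup C)-\mu(A)-\mu(B)-\mu(C)$. The $q$-measure $\mu$ actualizes $\phi$ if there is a symmetric function $f:\Omega\times\Omega\to(0,\infty)$ such that for all $A\in\mathcal{A}$,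 $\mu(A)=\int g_A\,d\phi$, where $g_A(\omega')=\int_A f(\cdot,\omega')\,d\phi$ (the $q$-integral over $A$ of $\omega\mapsto f(\omega,\omega')$). *)

theory Defs
  imports "HOL-Analysis.Analysis"
begin

definition coevent :: "'a set \<Rightarrow> ('a set \<Rightarrow> nat) \<Rightarrow> bool" where
  "coevent \<Omega> \<phi> \<longleftrightarrow> \<phi> {} = 0 \<and> (\<forall>A. A \<subseteq> \<Omega> \<longrightarrow> \<phi> A \<in> {0, 1})"

definition eval_map :: "'a \<Rightarrow> 'a set \<Rightarrow> nat" where
  "eval_map \<omega> A = (if \<omega> \<in> A then 1 else 0)"

definition coev_add :: "('a set \<Rightarrow> nat) \<Rightarrow> ('a set \<Rightarrow> nat) \<Rightarrow> 'a set \<Rightarrow> nat" where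
  "coev_add \<phi> \<psi> A = (\<phi> A + \<psi> A) mod 2"

definition qint :: "'a set \<Rightarrow> ('a set \<Rightarrow> nat) \<Rightarrow> ('a \<Rightarrow> real) \<Rightarrow> real" where
  "qint \<Omega> \<phi> f = (LINT l:{0..}|lborel. real (\<phi> {w \<in> \<Omega>. f w > l}))"

definition qint_on :: "'a set \<Rightarrow> ('a set \<Rightarrow> nat) \<Rightarrow> 'a set \<Rightarrow> ('a \<Rightarrow> real) \<Rightarrow> real" where
  "qint_on \<Omega> \<phi> A f = qint \<Omega> \<phi> (\<lambda>w. f w * indicator A w)"

definition qmeasure :: "'a set \<Rightarrow> ('a set \<Rightarrow> real) \<Rightarrow> bool" where
  "qmeasure \<Omega> \<mu> \<longleftrightarrow>
     (\<forall>A. A \<subseteq> \<Omega> \<longrightarrow> \<mu> A \<ge> 0) \<and>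
     (\<forall>A B C. A \<subseteq> \<Omega> \<longrightarrow> B \<subseteq> \<Omega> \<longrightarrow> C \<subseteq> \<Omega> \<longrightarrow>
        A \<inter> B = {} \<longrightarrow> A \<inter> C = {} \<longrightarrow> B \<inter> C = {} \<longrightarrow>
        \<mu> (A \<union> B \<union> C) = \<mu> (A \<union> B) + \<mu> (A \<union> C) + \<mu> (B \<union> C) - \<mu> A - \<mu> B - \<mu> C)"

definition actualizes :: "'a set \<Rightarrow> ('a set \<Rightarrow> real) \<Rightarrow> ('a set \<Rightarrow> nat) \<Rightarrow> bool" where
  "actualizes \<Omega> \<mu> \<phi> \<longleftrightarrow>
     (\<exists>f :: 'a \<Rightarrow> 'a \<Rightarrow> real.
        (\<forall>x\<in>\<Omega>. \<forall>y\<in>\<Omega>. f x y > 0 \<and> f x y = f y x) \<and>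
        (\<forall>A. A \<subseteq> \<Omega> \<longrightarrow>
           \<mu> A = qint \<Omega> \<phi> (\<lambda>w'. qint_on \<Omega> \<phi> A (\<lambda>w. f w w'))))"

end

theory Submission
  imports Defs
begin

lemma qint2:
  assumes "w1 \<noteq> w2"
  shows "qint {w1, w2} (coev_add (eval_map w1) (eval_map w2)) g
         = \<bar>max (g w1) 0 - max (g w2) 0\<bar>"
proof -
  define c where "c = max (g w1) 0"
  define d where "d = max (g w2) 0"
  have eq: "(\<lambda>l. indicator {0..} l *\<^sub>R
              real (coev_add (eval_map w1) (eval_map w2) {w \<in> {w1, w2}. g w > l}))
          = (indicator {min c d..<max c d} :: real \<Rightarrow> real)"
  proof
    fix l :: real
    show "indicator {0..} l *\<^sub>R
              real (coev_add (eval_map w1) (eval_map w2) {w \<in> {w1, w2}. g w > l})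
          = indicator {min c d..<max c d} l"
      using assms unfolding c_def d_def
      by (auto simp: indicator_def coev_add_def eval_map_def max_def min_def)
  qed
  have "qint {w1, w2} (coev_add (eval_map w1) (eval_map w2)) g
        = measure lborel {min c d..<max c d}"
    unfolding qint_def set_lebesgue_integral_def eq by simp
  also have "\<dots> = \<bar>c - d\<bar>" by (simp add: max_def min_def)
  finally show ?thesis by (simp add: c_def d_def)
qed

theorem theorem4p1:
  fixes w1 w2 :: 'a and \<mu> :: "'a set \<Rightarrow> real"
  assumes "w1 \<noteq> w2"
    and "qmeasure {w1, w2} \<mu>"
  shows "actualizes {w1, w2} \<mu> (coev_add (eval_map w1) (eval_map w2)) \<longleftrightarrow>
         \<mu> {w1, w2} = max (\<mu> {w1}) (\<mu> {w2}) - min (\<mu> {w1}) (\<mu> {w2})"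
proof -
  note Q = qint2[OF assms(1)]
  have ind1: "\<And>x::real. x * indicator {w1} w1 = x" "\<And>x::real. x * indicator {w1} w2 = 0"
    "\<And>x::real. x * indicator {w2} w2 = x" "\<And>x::real. x * indicator {w2} w1 = 0"
    "\<And>x::real. x * indicator {w1,w2} w1 = x" "\<And>x::real. x * indicator {w1,w2} w2 = x"
    "\<And>(x::real) w. x * indicator {} w = 0"
    using assms(1) by (auto simp: indicator_def)
  have m0: "\<mu> {} = 0"
    using assms(2) unfolding qmeasure_def by (drule_tac conjunct2, drule_tac x="{}" in spec, drule_tac x="{}" in spec, drule_tac x="{}" in spec) simp
  have pos: "\<mu> {w1} \<ge> 0" "\<mu> {w2} \<ge> 0" using assms(2) unfolding qmeasure_def by auto
  show ?thesis
  proof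
    assume "actualizes {w1, w2} \<mu> (coev_add (eval_map w1) (eval_map w2))"
    then obtain f where fp: "\<forall>x\<in>{w1,w2}. \<forall>y\<in>{w1,w2}. f x y > 0 \<and> f x y = f y x"
      and fm: "\<forall>A. A \<subseteq> {w1,w2} \<longrightarrow> \<mu> A = qint {w1, w2} (coev_add (eval_map w1) (eval_map w2))
           (\<lambda>w'. qint_on {w1, w2} (coev_add (eval_map w1) (eval_map w2)) A (\<lambda>w. f w w'))"
      unfolding actualizes_def by (elim exE conjE) (rule that; assumption)
    have s: "f w2 w1 = f w1 w2" "f w1 w1 > 0" "f w1 w2 > 0" "f w2 w2 > 0" using fp by blast+
    have a: "\<mu> {w1} = \<bar>f w1 w1 - f w1 w2\<bar>"
      using fm[rule_format, of "{w1}"] s by (simp add: qint_on_def Q ind1)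
    have b: "\<mu> {w2} = \<bar>f w1 w2 - f w2 w2\<bar>"
      using fm[rule_format, of "{w2}"] s by (simp add: qint_on_def Q ind1)
    have c: "\<mu> {w1,w2} = \<bar>\<bar>f w1 w1 - f w1 w2\<bar> - \<bar>f w1 w2 - f w2 w2\<bar>\<bar>"
      using fm[rule_format, of "{w1,w2}"] s by (simp add: qint_on_def Q ind1)
    show "\<mu> {w1, w2} = max (\<mu> {w1}) (\<mu> {w2}) - min (\<mu> {w1}) (\<mu> {w2})"
      using a b c by (simp add: max_def min_def)
  next
    assume H: "\<mu> {w1, w2} = max (\<mu> {w1}) (\<mu> {w2}) - min (\<mu> {w1}) (\<mu> {w2})"
    define f where "f = (\<lambda>x y. if x = y then (if x = w1 then 1 + \<mu> {w1} else 1 + \<mu> {w2}) else (1::real))"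
    have f: "f w1 w1 = 1 + \<mu> {w1}" "f w2 w2 = 1 + \<mu> {w2}" "f w1 w2 = 1" "f w2 w1 = 1"
      using assms(1) by (auto simp: f_def)
    show "actualizes {w1, w2} \<mu> (coev_add (eval_map w1) (eval_map w2))"
      unfolding actualizes_def
    proof (intro exI[of _ f] conjI allI impI)
      show "\<forall>x\<in>{w1,w2}. \<forall>y\<in>{w1,w2}. f x y > 0 \<and> f x y = f y x"
        using pos f by auto
    next
      fix A assume "A \<subseteq> {w1, w2}"
      hence "A = {} \<or> A = {w1} \<or> A = {w2} \<or> A = {w1,w2}" by blast
      moreover have "\<mu> {} = qint {w1, w2} (coev_add (eval_map w1) (eval_map w2))
           (\<lambda>w'. qint_on {w1, w2} (coev_add (eval_map w1) (eval_map w2)) {} (\<lambda>w. f w w'))"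
        using m0 by (simp add: qint_on_def Q ind1)
      moreover have "\<mu> {w1} = qint {w1, w2} (coev_add (eval_map w1) (eval_map w2))
           (\<lambda>w'. qint_on {w1, w2} (coev_add (eval_map w1) (eval_map w2)) {w1} (\<lambda>w. f w w'))"
        using pos by (simp add: qint_on_def Q ind1 f)
      moreover have "\<mu> {w2} = qint {w1, w2} (coev_add (eval_map w1) (eval_map w2))
           (\<lambda>w'. qint_on {w1, w2} (coev_add (eval_map w1) (eval_map w2)) {w2} (\<lambda>w. f w w'))"
        using pos by (simp add: qint_on_def Q ind1 f)
      moreover have "\<mu> {w1,w2} = qint {w1, w2} (coev_add (eval_map w1) (eval_map w2))
           (\<lambda>w'. qint_on {w1, w2} (coev_add (eval_map w1) (eval_map w2)) {w1,w2} (\<lambda>w. f w w'))"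
        using pos H by (simp add: qint_on_def Q ind1 f max_def min_def)
      ultimately show "\<mu> A = qint {w1, w2} (coev_add (eval_map w1) (eval_map w2))
           (\<lambda>w'. qint_on {w1, w2} (coev_add (eval_map w1) (eval_map w2)) A (\<lambda>w. f w w'))"
        by blast
    qed
  qed
qed

end
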